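(* Suppose there is $K>0$ such that $\|\nabla_{(\theta,x)}\ell(\theta,x)-\nabla_{(\theta,x)}\ell(\theta',x')\|\le K\|(\theta,x)-(\theta',x')\|$ for all $(\theta,x),(\theta',x')\in\mathbb{R}^{d_\theta}\times\mathbb{R}^{d_x}$. Then there is a constant $K_{\mathcal{F}}>0$ such that $$\|\nabla_\theta\mathcal{F}(\theta,q)-\nabla_\theta\mathcal{F}(\theta',q')\|\le K_{\mathcal{F}}\big(\|\theta-\theta'\|+\mathsf{W}_1(q,q')\big)$$ for all $\theta,\theta'\in\mathbb{R}^{d_\theta}$ and $q,q'\in\mathcal{P}(\mathbb{R}^{2d_x})$.
   Context: $\ell(\theta,x)=\log p_\theta(y,x)$ for a latent variable model $p_\theta(y,x)$ with fixed data $y$. $\mathcal{P}(\mathbb{R}^{2d_x})$: probability measures on $\mathbb{R}^{d_x}\times\mathbb{R}^{d_x}$ with Lebesgue density and finite second moment; $\mathsf{W}_1$ is the Wasserstein-1 distance. Here $\nabla_\theta\mathcal{F}(\theta,q):=-\int\nabla_\theta\ell(\theta,x)\,q(\mathrm{d}x,\mathrm{d}u)$ is the $\theta$-gradient of the momentum-enriched free energy $\mathcal{F}(\theta,m,q)=\int\log\frac{q(x,u)}{p_\theta(y,x)r_{\eta_x}(u)}q(x,u)\mathrm{d}x\mathrm{d}u+\frac{\eta_\theta}{2}\|m\|^2$ (with $r_{\eta_x}=\mathcal{N}(0,\eta_x^{-1}I)$), which does not depend on $m$. *)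

theory Defs
  imports "HOL-Analysis.Analysis" "HOL-Probability.Probability"
begin

definition P2ac :: "('b::euclidean_space \<times> 'b) measure set" where
  "P2ac = {q. prob_space q \<and> sets q = sets borel \<and>
              absolutely_continuous lborel q \<and>
              (\<integral>\<^sup>+ z. ennreal ((norm z)\<^sup>2) \<partial>q) < \<infinity>}"

definition couplings :: "'c::euclidean_space measure \<Rightarrow> 'c measure \<Rightarrow> ('c \<times> 'c) measure set" where
  "couplings q q' = {\<gamma>. prob_space \<gamma> \<and> sets \<gamma> = sets borel \<and>
                       distr \<gamma> borel fst = q \<and> distr \<gamma> borel snd = q'}"

definition W1 :: "'c::euclidean_space measure \<Rightarrow> 'c measure \<Rightarrow> ennreal" where
  "W1 q q' = (INF \<gamma>\<in>couplings q q'. \<integral>\<^sup>+ p. ennreal (dist (fst p) (snd p)) \<partial>\<gamma>)"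

text \<open>theta-gradient of the momentum-enriched free energy:
  - \<integral> \<nabla>_theta l(theta,x) q(dx,du), where G is the full gradient of l.\<close>
definition grad_theta_F ::
  "('a::euclidean_space \<times> 'b::euclidean_space \<Rightarrow> 'a \<times> 'b) \<Rightarrow> 'a \<Rightarrow> ('b \<times> 'b) measure \<Rightarrow> 'a" where
  "grad_theta_F G \<theta> q = - (\<integral> p. fst (G (\<theta>, fst p)) \<partial>q)"

end

theory Submission
  imports Defs
begin

lemma distr_pair_snd':
  assumes "prob_space M" "prob_space N" shows "distr (M \<Otimes>\<^sub>M N) N snd = N"
proof (intro measure_eqI)
  interpret pair_prob_space M N using assms
    by (simp add: pair_prob_space_def pair_sigma_finite_def prob_space_imp_sigma_finite)
  fix A assume A: "A \<in> sets (distr (M \<Otimes>\<^sub>M N) N snd)"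
  from A have "emeasure (distr (M \<Otimes>\<^sub>M N) N snd) A = emeasure (M \<Otimes>\<^sub>M N) (space M \<times> A)"
    by (auto simp add: emeasure_distr space_pair_measure dest: sets.sets_into_space intro!: arg_cong2[where f=emeasure])
  also have "\<dots> = emeasure M (space M) * emeasure N A"
    using A by (intro M2.emeasure_pair_measure_Times) auto
  finally show "emeasure (distr (M \<Otimes>\<^sub>M N) N snd) A = emeasure N A"
    by (simp add: M1.emeasure_space_1)
qed simp

lemma P2ac_first_moment:
  assumes q: "q \<in> P2ac"
  shows "(\<integral>\<^sup>+ z. ennreal (norm z) \<partial>q) < \<infinity>"
proof -
  have ps: "prob_space q" and m2: "(\<integral>\<^sup>+ z. ennreal ((norm z)\<^sup>2) \<partial>q) < \<infinity>"
    using q by (auto simp: P2ac_def)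
  have "(\<integral>\<^sup>+ z. ennreal (norm z) \<partial>q) \<le> (\<integral>\<^sup>+ z. (1 + ennreal ((norm z)\<^sup>2)) \<partial>q)"
  proof (intro nn_integral_mono)
    fix z
    have "norm z \<le> 1 + (norm z)\<^sup>2"
    proof -
      have "0 \<le> (norm z - 1)\<^sup>2" by simp
      then have "norm z * 2 \<le> 1 + norm z * norm z" by (simp add: power2_eq_square algebra_simps)
      then show ?thesis using norm_ge_zero[of z] unfolding power2_eq_square by linarith
    qed
    then have "ennreal (norm z) \<le> ennreal (1 + (norm z)\<^sup>2)" by (rule ennreal_leI)
    also have "\<dots> = 1 + ennreal ((norm z)\<^sup>2)" by (subst ennreal_plus) auto
    finally show "ennreal (norm z) \<le> 1 + ennreal ((norm z)\<^sup>2)" .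
  qed
  also have "\<dots> = (\<integral>\<^sup>+ z. 1 \<partial>q) + (\<integral>\<^sup>+ z. ennreal ((norm z)\<^sup>2) \<partial>q)"
  proof (rule nn_integral_add)
    have "sets q = sets borel" using q by (simp add: P2ac_def)
    then show "(\<lambda>z. ennreal ((norm z)\<^sup>2)) \<in> borel_measurable q"
      using measurable_cong_sets by fastforce
  qed simp
  also have "\<dots> < \<infinity>"
    using m2 ps by (simp add: prob_space.emeasure_space_1)
  finally show ?thesis .
qed

lemma P2ac_integrable_norm:
  assumes q: "q \<in> P2ac"
  shows "integrable q (\<lambda>z. norm z)"
proof -
  have "sets q = sets borel" using q by (auto simp: P2ac_def)
  then have m: "(\<lambda>z. norm z) \<in> borel_measurable q" using measurable_cong_sets by fastforce
  show ?thesis using P2ac_first_moment[OF q] m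
    by (intro integrableI_nonneg) (auto simp: less_top)
qed

lemma fst_borel: "fst \<in> borel_measurable (borel :: ('x::second_countable_topology \<times> 'y::second_countable_topology) measure)"
  using measurable_fst[of "borel :: 'x measure" "borel :: 'y measure"] by (simp add: borel_prod)

lemma snd_borel: "snd \<in> borel_measurable (borel :: ('x::second_countable_topology \<times> 'y::second_countable_topology) measure)"
  using measurable_snd[of "borel :: 'x measure" "borel :: 'y measure"] by (simp add: borel_prod)

lemma meas_sets_borel: "sets M = sets borel \<Longrightarrow> f \<in> borel_measurable borel \<Longrightarrow> f \<in> borel_measurable M"
  using measurable_cong_sets[of M borel borel borel] by simp

lemma coupling_nn_fst:
  assumes g: "g \<in> couplings q q'" and f: "f \<in> borel_measurable borel"
  shows "(\<integral>\<^sup>+ p. f (fst p) \<partial>g) = (\<integral>\<^sup>+ x. f x \<partial>q)"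
proof -
  have s: "sets g = sets borel" and d: "distr g borel fst = q" using g by (auto simp: couplings_def)
  have m: "fst \<in> measurable g borel" using s fst_borel by (rule meas_sets_borel)
  have f': "f \<in> borel_measurable (distr g borel fst)" by (rule meas_sets_borel[OF _ f]) simp
  show ?thesis using nn_integral_distr[OF m f'] d by simp
qed

lemma coupling_nn_snd:
  assumes g: "g \<in> couplings q q'" and f: "f \<in> borel_measurable borel"
  shows "(\<integral>\<^sup>+ p. f (snd p) \<partial>g) = (\<integral>\<^sup>+ x. f x \<partial>q')"
proof -
  have s: "sets g = sets borel" and d: "distr g borel snd = q'" using g by (auto simp: couplings_def)
  have m: "snd \<in> measurable g borel" using s snd_borel by (rule meas_sets_borel)
  have f': "f \<in> borel_measurable (distr g borel snd)" by (rule meas_sets_borel[OF _ f]) simp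
  show ?thesis using nn_integral_distr[OF m f'] d by simp
qed

lemma ennreal_norm_borel: "(\<lambda>x::'b::real_normed_vector. ennreal (norm x)) \<in> borel_measurable borel"
  using measurable_compose[OF borel_measurable_norm measurable_ennreal] by (simp add: comp_def)

lemma W1_finite:
  fixes q q' :: "('b::euclidean_space \<times> 'b) measure"
  assumes q: "q \<in> P2ac" and q': "q' \<in> P2ac"
  shows "W1 q q' < \<infinity>"
proof -
  have pq: "prob_space q" and sq: "sets q = sets borel" using q by (auto simp: P2ac_def)
  have pq': "prob_space q'" and sq': "sets q' = sets borel" using q' by (auto simp: P2ac_def)
  let ?g = "q \<Otimes>\<^sub>M q'"
  have sg: "sets ?g = sets borel"
  proof -
    have "sets ?g = sets (borel \<Otimes>\<^sub>M borel)" using sq sq' by (rule sets_pair_measure_cong)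
    then show ?thesis by (metis borel_prod)
  qed
  have "distr ?g borel fst = distr ?g q fst"
    by (rule distr_cong[OF refl]) (simp_all add: sq)
  also have "\<dots> = q" using pq' by (rule prob_space.distr_pair_fst)
  finally have d1: "distr ?g borel fst = q" .
  have "distr ?g borel snd = distr ?g q' snd"
    by (rule distr_cong[OF refl]) (simp_all add: sq')
  also have "\<dots> = q'" using pq pq' by (rule distr_pair_snd')
  finally have d2: "distr ?g borel snd = q'" .
  have g: "?g \<in> couplings q q'"
    unfolding couplings_def by (intro CollectI conjI prob_space_pair[OF pq pq'] sg d1 d2)
  have "W1 q q' \<le> (\<integral>\<^sup>+ p. ennreal (dist (fst p) (snd p)) \<partial>?g)"
    unfolding W1_def using g by (rule INF_lower)
  also have "\<dots> \<le> (\<integral>\<^sup>+ p. (ennreal (norm (fst p)) + ennreal (norm (snd p))) \<partial>?g)"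
  proof (rule nn_integral_mono)
    fix p assume "p \<in> space ?g"
    have "dist (fst p) (snd p) \<le> norm (fst p) + norm (snd p)"
      unfolding dist_norm by (rule norm_triangle_ineq4)
    then have "ennreal (dist (fst p) (snd p)) \<le> ennreal (norm (fst p) + norm (snd p))"
      by (rule ennreal_leI)
    also have "\<dots> = ennreal (norm (fst p)) + ennreal (norm (snd p))"
      by (rule ennreal_plus) simp_all
    finally show "ennreal (dist (fst p) (snd p)) \<le> ennreal (norm (fst p)) + ennreal (norm (snd p))" .
  qed
  also have "\<dots> = (\<integral>\<^sup>+ p. ennreal (norm (fst p)) \<partial>?g) + (\<integral>\<^sup>+ p. ennreal (norm (snd p)) \<partial>?g)"
  proof (rule nn_integral_add)
    from measurable_compose[OF fst_borel ennreal_norm_borel]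
    show "(\<lambda>p. ennreal (norm (fst p))) \<in> borel_measurable ?g"
      using sg meas_sets_borel by blast
    from measurable_compose[OF snd_borel ennreal_norm_borel]
    show "(\<lambda>p. ennreal (norm (snd p))) \<in> borel_measurable ?g"
      using sg meas_sets_borel by blast
  qed
  also have "\<dots> = (\<integral>\<^sup>+ x. ennreal (norm x) \<partial>q) + (\<integral>\<^sup>+ x. ennreal (norm x) \<partial>q')"
    using coupling_nn_fst[OF g ennreal_norm_borel] coupling_nn_snd[OF g ennreal_norm_borel]
    by (rule arg_cong2[where f="(+)"])
  also have "\<dots> < \<infinity>"
    using P2ac_first_moment[OF q] P2ac_first_moment[OF q'] unfolding infinity_ennreal_def ennreal_add_less_top by (rule conjI)
  finally show ?thesis .
qed

lemma fst_norm_le: "norm (fst z) \<le> norm z"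
  using norm_fst_le[of "fst z" "snd z"] by simp

theorem propositionG1:
  fixes l :: "'a::euclidean_space \<times> 'b::euclidean_space \<Rightarrow> real"
    and G :: "'a \<times> 'b \<Rightarrow> 'a \<times> 'b"
    and K :: real
  assumes grad: "\<And>z. (l has_derivative (\<lambda>h. G z \<bullet> h)) (at z)"
    and K_pos: "K > 0"
    and lip: "\<And>z z'. norm (G z - G z') \<le> K * norm (z - z')"
  shows "\<exists>KF > 0. \<forall>\<theta> \<theta>' q q'. q \<in> P2ac \<longrightarrow> q' \<in> P2ac \<longrightarrow>
           norm (grad_theta_F G \<theta> q - grad_theta_F G \<theta>' q')
             \<le> KF * (norm (\<theta> - \<theta>') + enn2real (W1 q q'))"
proof (intro exI[of _ K] conjI allI impI K_pos)
  define h where "h = (\<lambda>t (p::'b \<times> 'b). fst (G (t, fst p)))"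
  have Gcont: "continuous_on UNIV G"
  proof (rule lipschitz_on_continuous_on[of K])
    show "K-lipschitz_on UNIV G"
    proof (rule lipschitz_onI)
      fix x y show "dist (G x) (G y) \<le> K * dist x y" unfolding dist_norm by (rule lip)
    qed (use K_pos in simp)
  qed
  have Gm: "G \<in> borel_measurable borel"
    using Gcont by (rule borel_measurable_continuous_onI)
  have hm: "h t \<in> borel_measurable borel" for t
  proof -
    have "(\<lambda>p::'b\<times>'b. (t, fst p)) \<in> borel_measurable borel"
      by (intro borel_measurable_continuous_onI continuous_intros)
    from measurable_compose[OF this Gm] have "(\<lambda>p::'b\<times>'b. G (t, fst p)) \<in> borel_measurable borel" .
    from measurable_compose[OF this fst_borel] show ?thesis unfolding h_def by simp
  qed
  have hlip1: "norm (h t p - h t' p) \<le> K * norm (t - t')" for t t' p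
  proof -
    have "norm (h t p - h t' p) = norm (fst (G (t, fst p) - G (t', fst p)))" by (simp add: h_def)
    also have "\<dots> \<le> norm (G (t, fst p) - G (t', fst p))" by (rule fst_norm_le)
    also have "\<dots> \<le> K * norm ((t, fst p) - (t', fst p))" by (rule lip)
    also have "\<dots> = K * norm (t - t')" by (simp add: norm_Pair)
    finally show ?thesis .
  qed
  have hlip2: "norm (h t p - h t p') \<le> K * dist p p'" for t p p'
  proof -
    have "norm (h t p - h t p') = norm (fst (G (t, fst p) - G (t, fst p')))" by (simp add: h_def)
    also have "\<dots> \<le> norm (G (t, fst p) - G (t, fst p'))" by (rule fst_norm_le)
    also have "\<dots> \<le> K * norm ((t, fst p) - (t, fst p'))" by (rule lip)
    also have "\<dots> = K * norm (fst (p - p'))" by (simp add: norm_Pair)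
    also have "\<dots> \<le> K * dist p p'"
      using K_pos fst_norm_le[of "p - p'"] by (simp add: dist_norm)
    finally show ?thesis .
  qed
  have hint: "integrable q (h t)" if q: "q \<in> P2ac" for q t
  proof -
    have sq: "sets q = sets borel" and pq: "prob_space q" using q by (auto simp: P2ac_def)
    interpret prob_space q by (rule pq)
    let ?c = "norm (G (0, 0)) + K * norm t"
    have "integrable q (\<lambda>p. ?c + K * norm p)"
      using P2ac_integrable_norm[OF q] by auto
    then show ?thesis
    proof (rule Bochner_Integration.integrable_bound)
      show "h t \<in> borel_measurable q" using sq hm meas_sets_borel by blast
      show "AE p in q. norm (h t p) \<le> norm (?c + K * norm p)"
      proof (intro AE_I2)
        fix p :: "'b \<times> 'b"
        have a1: "norm (h t p) \<le> norm (G (t, fst p))" unfolding h_def by (rule fst_norm_le)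
        have a2: "norm (G (t, fst p)) \<le> norm (G (0,0)) + norm (G (t, fst p) - G (0, 0))" by (rule norm_triangle_sub)
        have a3: "norm (G (t, fst p) - G (0, 0)) \<le> K * norm ((t, fst p) - (0, 0))" by (rule lip)
        have a4: "norm ((t, fst p) - (0::'a, 0::'b)) \<le> norm t + norm p"
          using norm_Pair_le[of t "fst p"] fst_norm_le[of p] by simp
        have a5: "K * norm ((t, fst p) - (0::'a, 0::'b)) \<le> K * (norm t + norm p)"
          using a4 K_pos by (intro mult_left_mono) auto
        have a6: "K * (norm t + norm p) = K * norm t + K * norm p" by (rule distrib_left)
        have "norm (h t p) \<le> ?c + K * norm p" using a1 a2 a3 a5 a6 by linarith
        then show "norm (h t p) \<le> norm (?c + K * norm p)" by simp
      qed
    qed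
  qed
  fix \<theta> \<theta>' :: 'a and q q' :: "('b \<times> 'b) measure"
  assume q: "q \<in> P2ac" and q': "q' \<in> P2ac"
  have pq: "prob_space q" using q by (auto simp: P2ac_def)
  have A: "norm (integral\<^sup>L q (h \<theta>) - integral\<^sup>L q (h \<theta>')) \<le> K * norm (\<theta> - \<theta>')"
  proof -
    interpret prob_space q by (rule pq)
    have "norm (integral\<^sup>L q (h \<theta>) - integral\<^sup>L q (h \<theta>')) = norm (\<integral>p. h \<theta> p - h \<theta>' p \<partial>q)"
      using hint[OF q] by (simp add: Bochner_Integration.integral_diff)
    also have "\<dots> \<le> (\<integral>p. norm (h \<theta> p - h \<theta>' p) \<partial>q)" by (rule integral_norm_bound)
    also have "\<dots> \<le> (\<integral>p. K * norm (\<theta> - \<theta>') \<partial>q)"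
      using hint[OF q] hlip1 by (intro integral_mono) auto
    also have "\<dots> = K * norm (\<theta> - \<theta>')" by (simp add: prob_space)
    finally show ?thesis .
  qed
  define D where "D = integral\<^sup>L q (h \<theta>') - integral\<^sup>L q' (h \<theta>')"
  have B: "ennreal (norm D / K) \<le> (\<integral>\<^sup>+ p. ennreal (dist (fst p) (snd p)) \<partial>g)"
    if g: "g \<in> couplings q q'" for g
  proof -
    have sg: "sets g = sets borel" and d1: "distr g borel fst = q" and d2: "distr g borel snd = q'"
      and pg: "prob_space g" using g by (auto simp: couplings_def)
    have m1: "fst \<in> measurable g borel" using sg fst_borel by (rule meas_sets_borel)
    have m2: "snd \<in> measurable g borel" using sg snd_borel by (rule meas_sets_borel)
    have hm1: "h \<theta>' \<in> borel_measurable (distr g borel fst)" by (rule meas_sets_borel[OF _ hm]) simp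
    have hm2: "h \<theta>' \<in> borel_measurable (distr g borel snd)" by (rule meas_sets_borel[OF _ hm]) simp
    have i1: "integrable g (\<lambda>p. h \<theta>' (fst p))"
      using integrable_distr_eq[OF m1 hm] hint[OF q] d1 by simp
    have i2: "integrable g (\<lambda>p. h \<theta>' (snd p))"
      using integrable_distr_eq[OF m2 hm] hint[OF q'] d2 by simp
    have e1: "integral\<^sup>L q (h \<theta>') = (\<integral>p. h \<theta>' (fst p) \<partial>g)"
      using integral_distr[OF m1 hm] d1 by simp
    have e2: "integral\<^sup>L q' (h \<theta>') = (\<integral>p. h \<theta>' (snd p) \<partial>g)"
      using integral_distr[OF m2 hm] d2 by simp
    have Deq: "D = (\<integral>p. h \<theta>' (fst p) - h \<theta>' (snd p) \<partial>g)"
      unfolding D_def e1 e2 using i1 i2 by (simp add: Bochner_Integration.integral_diff)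
    have i3: "integrable g (\<lambda>p. h \<theta>' (fst p) - h \<theta>' (snd p))" using i1 i2 by auto
    have "ennreal (norm D) \<le> (\<integral>\<^sup>+ p. norm (h \<theta>' (fst p) - h \<theta>' (snd p)) \<partial>g)"
      unfolding Deq by (rule integral_norm_bound_ennreal[OF i3])
    also have "\<dots> \<le> (\<integral>\<^sup>+ p. ennreal K * ennreal (dist (fst p) (snd p)) \<partial>g)"
    proof (rule nn_integral_mono)
      fix p assume "p \<in> space g"
      have "norm (h \<theta>' (fst p) - h \<theta>' (snd p)) \<le> K * dist (fst p) (snd p)" by (rule hlip2)
      then show "ennreal (norm (h \<theta>' (fst p) - h \<theta>' (snd p))) \<le> ennreal K * ennreal (dist (fst p) (snd p))"
        using K_pos by (simp add: ennreal_mult[symmetric] del: ennreal_mult)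
    qed
    also have "\<dots> = ennreal K * (\<integral>\<^sup>+ p. ennreal (dist (fst p) (snd p)) \<partial>g)"
    proof (rule nn_integral_cmult)
      have "(\<lambda>p::('b\<times>'b)\<times>('b\<times>'b). dist (fst p) (snd p)) \<in> borel_measurable borel"
        by (intro borel_measurable_continuous_onI continuous_intros)
      moreover have "(\<lambda>x::real. ennreal x) \<in> borel_measurable borel" using measurable_ennreal by simp
      ultimately have "(\<lambda>p::('b\<times>'b)\<times>('b\<times>'b). ennreal (dist (fst p) (snd p))) \<in> borel_measurable borel"
        by (rule measurable_compose)
      then show "(\<lambda>p. ennreal (dist (fst p) (snd p))) \<in> borel_measurable g"
        using sg meas_sets_borel by blast
    qed
    finally have le: "ennreal (norm D) \<le> ennreal K * (\<integral>\<^sup>+ p. ennreal (dist (fst p) (snd p)) \<partial>g)" .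
    show ?thesis
    proof (cases "(\<integral>\<^sup>+ p. ennreal (dist (fst p) (snd p)) \<partial>g)")
      case (real x)
      have "ennreal (K * x) = ennreal K * ennreal x" using K_pos real by (simp add: ennreal_mult)
      with le real have "ennreal (norm D) \<le> ennreal (K * x)" by simp
      then have "norm D \<le> K * x" using K_pos real by (simp add: ennreal_le_iff)
      then have "norm D / K \<le> x" using K_pos by (simp add: pos_divide_le_eq mult.commute)
      then show ?thesis using real by simp
    qed simp
  qed
  have "ennreal (norm D / K) \<le> W1 q q'"
    unfolding W1_def using B by (rule INF_greatest)
  moreover have "W1 q q' < \<infinity>" using W1_finite[OF q q'] .
  ultimately obtain w where w: "W1 q q' = ennreal w" "0 \<le> w" "norm D / K \<le> w"
    by (cases "W1 q q'") auto
  have C: "norm D \<le> K * enn2real (W1 q q')"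
  proof -
    have "norm D \<le> w * K" using w(3) K_pos by (simp add: pos_divide_le_eq)
    then show ?thesis using w(1,2) by (simp add: mult.commute)
  qed
  have E: "grad_theta_F G \<theta> q - grad_theta_F G \<theta>' q'
      = (integral\<^sup>L q (h \<theta>') - integral\<^sup>L q (h \<theta>)) - D"
    unfolding grad_theta_F_def h_def D_def by simp
  have "norm ((integral\<^sup>L q (h \<theta>') - integral\<^sup>L q (h \<theta>)) - D)
      \<le> norm (integral\<^sup>L q (h \<theta>') - integral\<^sup>L q (h \<theta>)) + norm D"
    by (rule norm_triangle_ineq4)
  also have "norm (integral\<^sup>L q (h \<theta>') - integral\<^sup>L q (h \<theta>))
      = norm (integral\<^sup>L q (h \<theta>) - integral\<^sup>L q (h \<theta>'))"
    by (rule norm_minus_commute)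
  finally have F: "norm (grad_theta_F G \<theta> q - grad_theta_F G \<theta>' q')
      \<le> norm (integral\<^sup>L q (h \<theta>) - integral\<^sup>L q (h \<theta>')) + norm D"
    unfolding E .
  show "norm (grad_theta_F G \<theta> q - grad_theta_F G \<theta>' q')
             \<le> K * (norm (\<theta> - \<theta>') + enn2real (W1 q q'))"
  proof -
    have "K * (norm (\<theta> - \<theta>') + enn2real (W1 q q')) = K * norm (\<theta> - \<theta>') + K * enn2real (W1 q q')"
      by (rule distrib_left)
    then show ?thesis using F A C by linarith
  qed
qed

end
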